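(* Let $\mathbf A$ be a residuated semigroup balanced over $\mathbf I$. Then $(u_a/u_a)/u_b=(u_a/u_b)/(u_a/u_b)$ holds for all $a,b\in A$ if and only if $I$ has exactly one element.
   Context: A residuated semigroup is a structure $\langle A,\le,\cdot,\backslash,/\rangle$ where $\langle A,\le\rangle$ is a poset, $\langle A,\cdot\rangle$ is a semigroup, and $xy\le z\iff x\le z/y\iff y\le x\backslash z$. An element $p$ is positive if $a\le pa$ and $a\le ap$ for all $a$, idempotent if $pp=p$, central if $pa=ap$ for all $a$. Let $I$ be a nonempty set of central positive idempotents of $\mathbf A$ closed under multiplication ($\mathbf I=\langle I,\cdot\rangle$). $\mathbf A$ is balanced over $\mathbf I$ if for every $a\in A$ the element $u_a:=\max\{p\in I: pa=a\}$ exists (maximum w.r.t. $\le$). *)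

theory Defs
  imports Main
begin

text \<open>A residuated semigroup on the carrier type 'a: le is the partial order,
  mult the semigroup operation, ldiv x z = x\z, rdiv z y = z/y, with
  x*y \<le> z iff x \<le> z/y iff y \<le> x\z.\<close>

definition residuated_semigroup ::
  "('a \<Rightarrow> 'a \<Rightarrow> bool) \<Rightarrow> ('a \<Rightarrow> 'a \<Rightarrow> 'a) \<Rightarrow> ('a \<Rightarrow> 'a \<Rightarrow> 'a) \<Rightarrow> ('a \<Rightarrow> 'a \<Rightarrow> 'a) \<Rightarrow> bool" where
  "residuated_semigroup le mult ldiv rdiv \<longleftrightarrow>
     (\<forall>x. le x x) \<and>
     (\<forall>x y. le x y \<and> le y x \<longrightarrow> x = y) \<and>
     (\<forall>x y z. le x y \<and> le y z \<longrightarrow> le x z) \<and>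
     (\<forall>x y z. mult (mult x y) z = mult x (mult y z)) \<and>
     (\<forall>x y z. (le (mult x y) z \<longleftrightarrow> le x (rdiv z y)) \<and>
              (le (mult x y) z \<longleftrightarrow> le y (ldiv x z)))"

definition positive_el :: "('a \<Rightarrow> 'a \<Rightarrow> bool) \<Rightarrow> ('a \<Rightarrow> 'a \<Rightarrow> 'a) \<Rightarrow> 'a \<Rightarrow> bool" where
  "positive_el le mult p \<longleftrightarrow> (\<forall>a. le a (mult p a) \<and> le a (mult a p))"

definition idempotent_el :: "('a \<Rightarrow> 'a \<Rightarrow> 'a) \<Rightarrow> 'a \<Rightarrow> bool" where
  "idempotent_el mult p \<longleftrightarrow> mult p p = p"

definition central_el :: "('a \<Rightarrow> 'a \<Rightarrow> 'a) \<Rightarrow> 'a \<Rightarrow> bool" where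
  "central_el mult p \<longleftrightarrow> (\<forall>a. mult p a = mult a p)"

definition cpi_set :: "('a \<Rightarrow> 'a \<Rightarrow> bool) \<Rightarrow> ('a \<Rightarrow> 'a \<Rightarrow> 'a) \<Rightarrow> 'a set \<Rightarrow> bool" where
  "cpi_set le mult I \<longleftrightarrow> I \<noteq> {} \<and>
     (\<forall>p\<in>I. central_el mult p \<and> positive_el le mult p \<and> idempotent_el mult p) \<and>
     (\<forall>p\<in>I. \<forall>q\<in>I. mult p q \<in> I)"

definition is_u :: "('a \<Rightarrow> 'a \<Rightarrow> bool) \<Rightarrow> ('a \<Rightarrow> 'a \<Rightarrow> 'a) \<Rightarrow> 'a set \<Rightarrow> 'a \<Rightarrow> 'a \<Rightarrow> bool" where
  "is_u le mult I a p \<longleftrightarrow> p \<in> I \<and> mult p a = a \<and> (\<forall>q\<in>I. mult q a = a \<longrightarrow> le q p)"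

definition balanced :: "('a \<Rightarrow> 'a \<Rightarrow> bool) \<Rightarrow> ('a \<Rightarrow> 'a \<Rightarrow> 'a) \<Rightarrow> 'a set \<Rightarrow> bool" where
  "balanced le mult I \<longleftrightarrow> (\<forall>a. \<exists>p. is_u le mult I a p)"

text \<open>u_a = max {p \<in> I. p a = a} (unique by antisymmetry when it exists).\<close>
definition u_el :: "('a \<Rightarrow> 'a \<Rightarrow> bool) \<Rightarrow> ('a \<Rightarrow> 'a \<Rightarrow> 'a) \<Rightarrow> 'a set \<Rightarrow> 'a \<Rightarrow> 'a" where
  "u_el le mult I a = (THE p. is_u le mult I a p)"

end

theory Submission
  imports Defs
begin

theorem lemma6p8:
  fixes le :: "'a \<Rightarrow> 'a \<Rightarrow> bool" and mult ldiv rdiv :: "'a \<Rightarrow> 'a \<Rightarrow> 'a"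
    and I :: "'a set"
  assumes "residuated_semigroup le mult ldiv rdiv"
    and "cpi_set le mult I"
    and "balanced le mult I"
  shows "(\<forall>a b. rdiv (rdiv (u_el le mult I a) (u_el le mult I a)) (u_el le mult I b)
              = rdiv (rdiv (u_el le mult I a) (u_el le mult I b))
                     (rdiv (u_el le mult I a) (u_el le mult I b)))
         \<longleftrightarrow> (\<exists>p. I = {p})"
proof -
  have refl: "\<And>x. le x x" and anti: "\<And>x y. le x y \<Longrightarrow> le y x \<Longrightarrow> x = y"
    and trans: "\<And>x y z. le x y \<Longrightarrow> le y z \<Longrightarrow> le x z"
    and assoc: "\<And>x y z. mult (mult x y) z = mult x (mult y z)"
    and resr: "\<And>x y z. le (mult x y) z \<longleftrightarrow> le x (rdiv z y)"
    and resl: "\<And>x y z. le (mult x y) z \<longleftrightarrow> le y (ldiv x z)"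
    using assms(1) unfolding residuated_semigroup_def by blast+
  have ne: "I \<noteq> {}" and cen: "\<And>p a. p \<in> I \<Longrightarrow> mult p a = mult a p"
    and pos1: "\<And>p a. p \<in> I \<Longrightarrow> le a (mult p a)"
    and pos2: "\<And>p a. p \<in> I \<Longrightarrow> le a (mult a p)"
    and idem: "\<And>p. p \<in> I \<Longrightarrow> mult p p = p"
    and clo: "\<And>p q. p \<in> I \<Longrightarrow> q \<in> I \<Longrightarrow> mult p q \<in> I"
    using assms(2) unfolding cpi_set_def central_el_def positive_el_def idempotent_el_def
    by blast+
  have monr: "\<And>x y z. le x y \<Longrightarrow> le (mult x z) (mult y z)"
    using resr refl trans by metis
  have monl: "\<And>x y z. le x y \<Longrightarrow> le (mult z x) (mult z y)"
    using resl refl trans by metis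
  have uniq: "\<And>a p. is_u le mult I a p \<Longrightarrow> u_el le mult I a = p"
    unfolding u_el_def
  proof (rule the_equality)
    fix a p assume "is_u le mult I a p" thus "is_u le mult I a p" .
  next
    fix a p q assume "is_u le mult I a p" "is_u le mult I a q"
    thus "q = p" unfolding is_u_def using anti by blast
  qed
  have uI: "\<And>p. p \<in> I \<Longrightarrow> u_el le mult I p = p"
  proof -
    fix p assume p: "p \<in> I"
    have "is_u le mult I p p" unfolding is_u_def
    proof (intro conjI ballI impI)
      show "p \<in> I" by fact
      show "mult p p = p" using idem p by blast
      fix q assume "q \<in> I" "mult q p = p"
      thus "le q p" using pos2[OF p, of q] by simp
    qed
    thus "u_el le mult I p = p" by (rule uniq)
  qed
  have divself: "\<And>p. p \<in> I \<Longrightarrow> rdiv p p = p"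
  proof -
    fix p assume p: "p \<in> I"
    have "le p (rdiv p p)" using resr[of p p p] idem[OF p] refl by simp
    moreover have "le (rdiv p p) p"
      using resr[of "rdiv p p" p p] refl pos2[OF p, of "rdiv p p"] trans by blast
    ultimately show "rdiv p p = p" using anti by blast
  qed
  show ?thesis
  proof
    assume H: "\<forall>a b. rdiv (rdiv (u_el le mult I a) (u_el le mult I a)) (u_el le mult I b)
              = rdiv (rdiv (u_el le mult I a) (u_el le mult I b))
                     (rdiv (u_el le mult I a) (u_el le mult I b))"
    have le_pq: "le q p" if p: "p \<in> I" and q: "q \<in> I" for p q
    proof -
      define s where "s = mult p q"
      have s: "s \<in> I" using clo p q s_def by blast
      define r where "r = rdiv p s"
      have "rdiv (rdiv p p) s = rdiv (rdiv p s) (rdiv p s)"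
        using H[rule_format, of p s] uI[OF p] uI[OF s] by simp
      hence rr: "r = rdiv r r" using divself[OF p] r_def by simp
      have rs: "le (mult r s) p" using resr[of r s p] refl r_def by simp
      have "mult (mult s r) s = mult s r"
        using assoc cen[OF s] idem[OF s] by metis
      also have "mult s r = mult r s" using cen[OF s] by simp
      finally have "le (mult (mult s r) s) p" using rs by simp
      hence "le (mult s r) r" using resr r_def by simp
      hence "le s r" using resr rr by simp
      hence "le (mult s s) p" using resr r_def by simp
      hence "le s p" using idem[OF s] by simp
      moreover have "le q s" using pos1[OF p, of q] s_def by simp
      ultimately show ?thesis using trans by blast
    qed
    obtain p where p: "p \<in> I" using ne by blast
    have "I = {p}" using p le_pq anti by blast
    thus "\<exists>p. I = {p}" by blast
  next
    assume "\<exists>p. I = {p}"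
    then obtain e where e: "I = {e}" by blast
    have ue: "u_el le mult I a = e" for a
    proof -
      obtain p where "is_u le mult I a p" using assms(3) unfolding balanced_def by blast
      moreover hence "p = e" using e unfolding is_u_def by blast
      ultimately show ?thesis using uniq by blast
    qed
    have "rdiv e e = e" using divself e by blast
    thus "\<forall>a b. rdiv (rdiv (u_el le mult I a) (u_el le mult I a)) (u_el le mult I b)
              = rdiv (rdiv (u_el le mult I a) (u_el le mult I b))
                     (rdiv (u_el le mult I a) (u_el le mult I b))"
      using ue by simp
  qed
qed

end
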